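(* In the Restricted Grid Scheduling problem, for any finite multiset of items (each of size $S$ or $L$) and any admissible sequence of bins (each of size in $[S,M]$), there exists an optimal thrifty packing that contains no bad bin.
   Context: Fix an integer $S>1$, $L=2S-1$, $M=4S-3$. Items have size $S$ or $L$; bins have integer sizes in $[S,M]$ and arrive in a sequence, which is admissible if it ends with at least as many bins of size $M$ as there are items. A packing assigns every item to a bin with total item size in each bin at most the bin size; used bins are those receiving at least one item; the cost is the sum of sizes of used bins. A packing is valid if each empty bin is smaller than every item packed in a later bin; optimal if valid and of minimum cost among valid packings. A bin is wasteful if its empty space is at least the size of some item packed in a later bin; a packing is thrifty if it has no wasteful bin. A used bin is bad if it contains at least one item of size $S$, its empty space is at least $L-S$, and some item of size $L$ is packed in a later bin. *)

theory Defs
  imports Main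
begin

text \<open>Restricted Grid Scheduling. Items are given as a list of sizes (a multiset up to
order), bins as a list of sizes in arrival order. A packing is a map from item indices
to bin indices.\<close>

definition Lsz :: "nat \<Rightarrow> nat" where "Lsz S = 2 * S - 1"
definition Msz :: "nat \<Rightarrow> nat" where "Msz S = 4 * S - 3"

definition load :: "nat list \<Rightarrow> (nat \<Rightarrow> nat) \<Rightarrow> nat \<Rightarrow> nat" where
  "load items p j = (\<Sum>i<length items. if p i = j then items ! i else 0)"

definition used :: "nat list \<Rightarrow> (nat \<Rightarrow> nat) \<Rightarrow> nat \<Rightarrow> bool" where
  "used items p j = (\<exists>i<length items. p i = j)"

definition packing :: "nat list \<Rightarrow> nat list \<Rightarrow> (nat \<Rightarrow> nat) \<Rightarrow> bool" where
  "packing items bins p =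
     ((\<forall>i<length items. p i < length bins) \<and>
      (\<forall>j<length bins. load items p j \<le> bins ! j))"

definition cost :: "nat list \<Rightarrow> nat list \<Rightarrow> (nat \<Rightarrow> nat) \<Rightarrow> nat" where
  "cost items bins p = (\<Sum>j | j < length bins \<and> used items p j. bins ! j)"

definition valid :: "nat list \<Rightarrow> nat list \<Rightarrow> (nat \<Rightarrow> nat) \<Rightarrow> bool" where
  "valid items bins p =
     (packing items bins p \<and>
      (\<forall>j<length bins. \<not> used items p j \<longrightarrow>
         (\<forall>i<length items. j < p i \<longrightarrow> bins ! j < items ! i)))"

definition optimal :: "nat list \<Rightarrow> nat list \<Rightarrow> (nat \<Rightarrow> nat) \<Rightarrow> bool" where
  "optimal items bins p =
     (valid items bins p \<and> (\<forall>q. valid items bins q \<longrightarrow> cost items bins p \<le> cost items bins q))"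

definition wasteful :: "nat list \<Rightarrow> nat list \<Rightarrow> (nat \<Rightarrow> nat) \<Rightarrow> nat \<Rightarrow> bool" where
  "wasteful items bins p j =
     (\<exists>i<length items. j < p i \<and> items ! i \<le> bins ! j - load items p j)"

definition thrifty :: "nat list \<Rightarrow> nat list \<Rightarrow> (nat \<Rightarrow> nat) \<Rightarrow> bool" where
  "thrifty items bins p = (\<forall>j<length bins. \<not> wasteful items bins p j)"

definition bad :: "nat \<Rightarrow> nat list \<Rightarrow> nat list \<Rightarrow> (nat \<Rightarrow> nat) \<Rightarrow> nat \<Rightarrow> bool" where
  "bad S items bins p j =
     (used items p j \<and>
      (\<exists>i<length items. p i = j \<and> items ! i = S) \<and>
      Lsz S - S \<le> bins ! j - load items p j \<and>
      (\<exists>i<length items. j < p i \<and> items ! i = Lsz S))"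

definition admissible :: "nat \<Rightarrow> nat list \<Rightarrow> nat list \<Rightarrow> bool" where
  "admissible S items bins =
     (length items \<le> length bins \<and>
      (\<forall>j. length bins - length items \<le> j \<and> j < length bins \<longrightarrow> bins ! j = Msz S))"

end

theory Submission
  imports Defs
begin


lemma sum_upd:
  fixes g :: "nat \<Rightarrow> nat \<Rightarrow> nat"
  assumes "i < n"
  shows "(\<Sum>i'<n. g i' ((p(i:=t)) i')) + g i (p i) = (\<Sum>i'<n. g i' (p i')) + g i t"
proof -
  have A: "(\<Sum>i'<n. g i' ((p(i:=t)) i')) = g i t + (\<Sum>i'\<in>{..<n}-{i}. g i' (p i'))"
    using assms by (subst sum.remove[of _ i]) (auto intro!: sum.cong)
  have B: "(\<Sum>i'<n. g i' (p i')) = g i (p i) + (\<Sum>i'\<in>{..<n}-{i}. g i' (p i'))"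
    using assms by (simp add: sum.remove)
  show ?thesis using A B by simp
qed

lemma load_upd:
  assumes "i < length items"
  shows "load items (p(i:=t)) x + (if p i = x then items!i else 0) = load items p x + (if t = x then items!i else 0)"
  unfolding load_def using sum_upd[OF assms, where g = "\<lambda>i' y. if y = x then items!i' else 0" and p=p and t=t]
  by simp

lemma load_upd2:
  assumes "i < length items" "l < length items" "i \<noteq> l"
  shows "load items (p(i:=a, l:=b)) x + (if p i = x then items!i else 0) + (if p l = x then items!l else 0)
       = load items p x + (if a = x then items!i else 0) + (if b = x then items!l else 0)"
proof -
  have 1: "load items ((p(i:=a))(l:=b)) x + (if (p(i:=a)) l = x then items!l else 0) = load items (p(i:=a)) x + (if b = x then items!l else 0)"
    by (rule load_upd[OF assms(2)])
  have 2: "load items (p(i:=a)) x + (if p i = x then items!i else 0) = load items p x + (if a = x then items!i else 0)"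
    by (rule load_upd[OF assms(1)])
  show ?thesis using 1 2 assms(3) by simp
qed

lemma load_ge: "i < length items \<Longrightarrow> p i = x \<Longrightarrow> items!i \<le> load items p x"
  unfolding load_def
  by (rule order_trans[OF _ member_le_sum[of i "{..<length items}"]]) auto

lemma load_ge2: "i < length items \<Longrightarrow> l < length items \<Longrightarrow> i \<noteq> l \<Longrightarrow> p i = x \<Longrightarrow> p l = x
   \<Longrightarrow> items!i + items!l \<le> load items p x"
proof -
  assume a: "i < length items" "l < length items" "i \<noteq> l" "p i = x" "p l = x"
  have "(\<Sum>i'\<in>{i,l}. if p i' = x then items ! i' else 0) \<le> load items p x"
    unfolding load_def by (rule sum_mono2) (use a in auto)
  then show ?thesis using a by simp
qed

lemma load_unused: "\<not> used items p x \<Longrightarrow> load items p x = 0"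
  unfolding load_def used_def by (auto intro!: sum.neutral)

lemma used_upd: "i < length items \<Longrightarrow> used items (p(i:=t)) x \<longleftrightarrow> t = x \<or> (\<exists>i'<length items. i' \<noteq> i \<and> p i' = x)"
  unfolding used_def by auto

lemma used_upd2: "i < length items \<Longrightarrow> l < length items \<Longrightarrow> i \<noteq> l \<Longrightarrow>
   used items (p(i:=a, l:=b)) x \<longleftrightarrow> a = x \<or> b = x \<or> (\<exists>i'<length items. i' \<noteq> i \<and> i' \<noteq> l \<and> p i' = x)"
  unfolding used_def by auto

lemma cost_eq: "{x. x < length bins \<and> used items q x} = {x. x < length bins \<and> used items p x}
   \<Longrightarrow> cost items bins q = cost items bins p"
  unfolding cost_def by simp

lemma cost_remove: "{x. x < length bins \<and> used items q x} = {x. x < length bins \<and> used items p x} - {k}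
   \<Longrightarrow> k < length bins \<Longrightarrow> used items p k \<Longrightarrow> cost items bins q + bins!k = cost items bins p"
  unfolding cost_def by (simp add: sum.remove[of "{x. x < length bins \<and> used items p x}" k])

lemma cost_swap: "{x. x < length bins \<and> used items q x} = insert j' ({x. x < length bins \<and> used items p x} - {k})
   \<Longrightarrow> k < length bins \<Longrightarrow> used items p k \<Longrightarrow> \<not> used items p j'
   \<Longrightarrow> cost items bins q + bins!k = cost items bins p + bins!j'"
  unfolding cost_def
  by (simp add: sum.remove[of "{x. x < length bins \<and> used items p x}" k] sum.insert)


lemma sum_upd2:
  fixes g :: "nat \<Rightarrow> nat \<Rightarrow> nat"
  assumes "i < n" "l < n" "i \<noteq> l"
  shows "(\<Sum>i'<n. g i' ((p(i:=a, l:=b)) i')) + g i (p i) + g l (p l) = (\<Sum>i'<n. g i' (p i')) + g i a + g l b"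
proof -
  have 1: "(\<Sum>i'<n. g i' (((p(i:=a))(l:=b)) i')) + g l ((p(i:=a)) l) = (\<Sum>i'<n. g i' ((p(i:=a)) i')) + g l b"
    by (rule sum_upd[OF assms(2)])
  have 2: "(\<Sum>i'<n. g i' ((p(i:=a)) i')) + g i (p i) = (\<Sum>i'<n. g i' (p i')) + g i a"
    by (rule sum_upd[OF assms(1)])
  show ?thesis using 1 2 assms(3) by simp
qed

definition sp :: "nat list \<Rightarrow> (nat\<Rightarrow>nat) \<Rightarrow> nat" where "sp items p = (\<Sum>i<length items. p i)"
definition sl :: "nat \<Rightarrow> nat list \<Rightarrow> (nat\<Rightarrow>nat) \<Rightarrow> nat" where
  "sl S items p = (\<Sum>i<length items. if items!i = Lsz S then p i else 0)"

lemma sp_upd: "i < length items \<Longrightarrow> sp items (p(i:=t)) + p i = sp items p + t"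
  unfolding sp_def using sum_upd[of i "length items" "\<lambda>i' y. y" p t] by simp

lemma sp_upd2: "i < length items \<Longrightarrow> l < length items \<Longrightarrow> i \<noteq> l \<Longrightarrow> sp items (p(i:=a,l:=b)) + p i + p l = sp items p + a + b"
  unfolding sp_def using sum_upd2[of i "length items" l "\<lambda>i' y. y" p a b] by simp

lemma sl_upd2: "i < length items \<Longrightarrow> l < length items \<Longrightarrow> i \<noteq> l \<Longrightarrow>
  sl S items (p(i:=a,l:=b)) + (if items!i = Lsz S then p i else 0) + (if items!l = Lsz S then p l else 0)
   = sl S items p + (if items!i = Lsz S then a else 0) + (if items!l = Lsz S then b else 0)"
  unfolding sl_def using sum_upd2[of i "length items" l "\<lambda>i' y. if items!i' = Lsz S then y else 0" p a b] by simp



context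
  fixes S :: nat and items bins :: "nat list"
  assumes S1: "S > 1" and its: "\<forall>x\<in>set items. x = S \<or> x = Lsz S"
    and bs: "\<forall>b\<in>set bins. S \<le> b \<and> b \<le> Msz S" and adm: "admissible S items bins"
begin

lemma itc: "i < length items \<Longrightarrow> items!i = S \<or> items!i = Lsz S"
  using its nth_mem by blast

lemma bnd: "j < length bins \<Longrightarrow> S \<le> bins!j \<and> bins!j \<le> Msz S"
  using bs nth_mem by blast

lemma valid_exists: "\<exists>p. valid items bins p"
proof -
  define n where "n = length items"
  define m where "m = length bins"
  have nm: "n \<le> m" using adm unfolding admissible_def n_def m_def by simp
  define p0 where "p0 = (\<lambda>i. m - n + i)"
  have "packing items bins p0"
    unfolding packing_def
  proof (intro conjI allI impI)
    fix i assume "i < length items" then show "p0 i < length bins" using nm by (simp add: p0_def n_def m_def)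
  next
    fix x assume x: "x < length bins"
    show "load items p0 x \<le> bins ! x"
    proof (cases "m - n \<le> x")
      case False
      then have "load items p0 x = 0" unfolding load_def p0_def by (auto intro!: sum.neutral)
      then show ?thesis by simp
    next
      case True
      define i0 where "i0 = x - (m - n)"
      have i0: "i0 < n" using True x nm by (simp add: i0_def m_def)
      have "load items p0 x = (\<Sum>i<n. if i = i0 then items ! i else 0)"
        unfolding load_def p0_def n_def[symmetric] by (rule sum.cong) (use True i0_def in auto)
      also have "\<dots> = items ! i0" using i0 by simp
      also have "\<dots> \<le> Lsz S" using itc[of i0] i0 S1 n_def unfolding Lsz_def by auto
      also have "\<dots> \<le> bins ! x" using adm True x unfolding admissible_def Msz_def Lsz_def m_def n_def by auto
      finally show ?thesis .
    qed
  qed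
  then obtain p where pP: "packing items bins p" and pmin: "\<forall>q. packing items bins q \<longrightarrow> sp items p \<le> sp items q"
    using ex_has_least_nat[of "packing items bins" p0 "sp items"] by blast
  have "valid items bins p"
    unfolding valid_def
  proof (intro conjI allI impI pP)
    fix j i assume j: "j < length bins" and nu: "\<not> used items p j" and i: "i < length items" and ji: "j < p i"
    show "bins ! j < items ! i"
    proof (rule ccontr)
      assume "\<not> bins ! j < items ! i"
      then have le: "items ! i \<le> bins ! j" by simp
      define q where "q = p(i:=j)"
      have "packing items bins q"
        unfolding packing_def
      proof (intro conjI allI impI)
        fix i' assume "i' < length items" then show "q i' < length bins" using pP j unfolding q_def packing_def by auto
      next
        fix x assume x: "x < length bins"
        have e: "load items q x + (if p i = x then items!i else 0) = load items p x + (if j = x then items!i else 0)"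
          unfolding q_def by (rule load_upd[OF i])
        have "load items p x \<le> bins ! x" using pP x unfolding packing_def by auto
        moreover have "load items p j = 0" using load_unused[OF nu] .
        ultimately show "load items q x \<le> bins ! x" using e le ji by (cases "x = j") auto
      qed
      moreover have "sp items q + p i = sp items p + j" unfolding q_def by (rule sp_upd[OF i])
      ultimately show False using pmin ji by fastforce
    qed
  qed
  then show ?thesis by blast
qed


lemma LS: "Lsz S - S = S - 1" "S < Lsz S" "Msz S < 2 * Lsz S" "Lsz S \<le> Msz S"
  using S1 unfolding Lsz_def Msz_def by auto

lemma no_bad:
  assumes opt: "optimal items bins p"
   and minl: "\<forall>q. optimal items bins q \<and> sp items q = sp items p \<longrightarrow> sl S items p \<le> sl S items q"
   and j: "j < length bins"
  shows "\<not> bad S items bins p j"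
proof
  assume "bad S items bins p j"
  then obtain s l0 where s: "s < length items" "p s = j" "items!s = S"
    and spc: "Lsz S - S \<le> bins!j - load items p j"
    and l0: "l0 < length items" "j < p l0" "items!l0 = Lsz S" unfolding bad_def by blast
  have V: "valid items bins p" using opt unfolding optimal_def by blast
  have pl: "\<forall>i<length items. p i < length bins" and ld: "\<forall>x<length bins. load items p x \<le> bins!x"
    using V unfolding valid_def packing_def by auto
  have un: "\<forall>x<length bins. \<not> used items p x \<longrightarrow> (\<forall>i<length items. x < p i \<longrightarrow> bins!x < items!i)"
    using V unfolding valid_def by auto
  have usedj: "used items p j" using s unfolding used_def by auto
  show False
  proof (cases "\<exists>j'. j < j' \<and> j' < length bins \<and> \<not> used items p j' \<and> (\<exists>i<length items. j' < p i)")
    case True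
    then obtain j' where j': "j < j'" "j' < length bins" "\<not> used items p j'" "\<exists>i<length items. j' < p i"
      and jmin: "\<forall>j2<j'. \<not>(j < j2 \<and> j2 < length bins \<and> \<not> used items p j2 \<and> (\<exists>i<length items. j2 < p i))"
      using exists_least_iff[of "\<lambda>j'. j < j' \<and> j' < length bins \<and> \<not> used items p j' \<and> (\<exists>i<length items. j' < p i)"]
      by blast
    obtain i1 where i1: "i1 < length items" "j' < p i1" using j'(4) by blast
    obtain l where l: "l < length items" "j' < p l"
       and lm: "\<forall>y. y < length items \<and> j' < p y \<longrightarrow> length bins - p l \<le> length bins - p y"
      using ex_has_least_nat[of "\<lambda>i. i < length items \<and> j' < p i" i1 "\<lambda>i. length bins - p i"] i1 by blast
    have lmax: "\<forall>i<length items. p i \<le> p l"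
    proof (intro allI impI)
      fix i assume i: "i < length items"
      show "p i \<le> p l"
      proof (cases "j' < p i")
        case True then show ?thesis using lm i pl l by fastforce
      next
        case False then show ?thesis using l by simp
      qed
    qed
    define k where "k = p l"
    have k: "k < length bins" using pl l k_def by auto
    have bj': "bins!j' < items!l" using un j' l by auto
    have Sj': "S \<le> bins!j'" using bnd j' by auto
    have itl: "items!l = Lsz S" using itc[OF l(1)] bj' Sj' by auto
    have bj'L: "bins!j' < Lsz S" using bj' itl by simp
    have kalone: "\<forall>i<length items. i \<noteq> l \<longrightarrow> p i \<noteq> k"
    proof (intro allI impI notI)
      fix i assume i: "i < length items" "i \<noteq> l" "p i = k"
      have "bins!j' < items!i" using un j' i l k_def by auto
      then have "items!i = Lsz S" using itc[OF i(1)] Sj' by auto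
      moreover have "items!i + items!l \<le> load items p k" by (rule load_ge2[of i items l p k, OF i(1) l(1) i(2) i(3) k_def[symmetric]])
      ultimately show False using ld k itl bnd[OF k] LS by fastforce
    qed
    have sl: "s \<noteq> l" using s j' l by auto
    have jk: "j \<noteq> k" "j' \<noteq> k" "j \<noteq> j'" using j' l k_def by auto
    define q where "q = p(s:=j', l:=j)"
    have leq: "load items q x + (if j = x then items!s else 0) + (if k = x then items!l else 0)
       = load items p x + (if j' = x then items!s else 0) + (if j = x then items!l else 0)" for x
      using load_upd2[OF s(1) l(1) sl, of p j' j x] s(2) k_def unfolding q_def by simp
    have lj': "load items p j' = 0" using load_unused[OF j'(3)] .
    have ldq: "load items q x \<le> bins!x" if x: "x < length bins" for x
    proof -
      have e: "load items q x + (if j = x then items!s else 0) + (if k = x then items!l else 0)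
       = load items p x + (if j' = x then items!s else 0) + (if j = x then items!l else 0)" by (rule leq)
      have a: "load items p x \<le> bins!x" using ld x by auto
      have b: "load items p j \<le> bins!j" using ld j by auto
      show ?thesis
      proof (cases "x = j")
        case True then show ?thesis using e jk spc b s(3) itl LS(1) by auto
      next
        case F1: False
        show ?thesis
        proof (cases "x = j'")
          case True then show ?thesis using e jk lj' s(3) Sj' F1 by auto
        next
          case False then show ?thesis using e a F1 by (cases "x = k") auto
        qed
      qed
    qed
    have uq: "used items q x \<longleftrightarrow> j' = x \<or> j = x \<or> (\<exists>i'<length items. i' \<noteq> s \<and> i' \<noteq> l \<and> p i' = x)" for x
      unfolding q_def by (rule used_upd2[OF s(1) l(1) sl])
    have up: "used items p x \<longleftrightarrow> p s = x \<or> p l = x \<or> (\<exists>i'<length items. i' \<noteq> s \<and> i' \<noteq> l \<and> p i' = x)" for x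
      unfolding used_def using s(1) l(1) by auto
    have useteq: "{x. x < length bins \<and> used items q x} = insert j' ({x. x < length bins \<and> used items p x} - {k})"
    proof (intro set_eqI iffI)
      fix x assume "x \<in> {x. x < length bins \<and> used items q x}"
      then show "x \<in> insert j' ({x. x < length bins \<and> used items p x} - {k})"
        using uq[of x] up[of x] usedj kalone jk by auto
    next
      fix x assume "x \<in> insert j' ({x. x < length bins \<and> used items p x} - {k})"
      then show "x \<in> {x. x < length bins \<and> used items q x}"
        using uq[of x] up[of x] j' s k_def by auto
    qed
    have usedk: "used items p k" using l k_def unfolding used_def by auto
    have cq: "cost items bins q + bins!k = cost items bins p + bins!j'"
      by (rule cost_swap[OF useteq k usedk j'(3)])
    have vq: "valid items bins q"
      unfolding valid_def packing_def
    proof (intro conjI allI impI)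
      fix i assume "i < length items" then show "q i < length bins" using pl j j' unfolding q_def by auto
    next
      fix x assume "x < length bins" then show "load items q x \<le> bins ! x" by (rule ldq)
    next
      fix x i assume x: "x < length bins" and nu: "\<not> used items q x" and i: "i < length items" and xi: "x < q i"
      have xne: "x \<noteq> j'" "x \<noteq> j" using nu uq by auto
      show "bins ! x < items ! i"
      proof (cases "x = k")
        case True
        have "i \<noteq> s" "i \<noteq> l" using xi True jk j' k_def l sl unfolding q_def by auto
        then have "q i = p i" unfolding q_def by simp
        then show ?thesis using xi True lmax i k_def by fastforce
      next
        case False
        then have nup: "\<not> used items p x" using nu uq up xne k_def s(2) by auto
        show ?thesis
        proof (cases "i = s")
          case True
          have "\<not> j < x"
          proof
            assume "j < x"
            moreover have "x < j'" using xi True unfolding q_def using sl by simp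
            moreover have "x < p l" using \<open>x < j'\<close> l(2) by simp
            ultimately show False using jmin x nup l(1) by blast
          qed
          then have "x < p s" using xne s(2) by simp
          then show ?thesis using un x nup True s(1) by blast
        next
          case F2: False
          show ?thesis
          proof (cases "i = l")
            case True
            then have "x < p l" using xi j' l(2) unfolding q_def by auto
            then show ?thesis using un x nup True l(1) by blast
          next
            case False
            then have "q i = p i" using F2 unfolding q_def by simp
            then show ?thesis using un x nup i xi by auto
          qed
        qed
      qed
    qed
    have "cost items bins p \<le> cost items bins q" using opt vq unfolding optimal_def by blast
    moreover have "Lsz S \<le> bins!k" using load_ge[OF l(1), of p k] k_def itl ld k by fastforce
    ultimately show False using cq bj'L by linarith
  next
    case False
    define k where "k = p l0"
    have k: "k < length bins" using pl l0 k_def by auto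
    have sl: "s \<noteq> l0" using s l0 by auto
    have jk: "j \<noteq> k" using l0 k_def by auto
    define q where "q = p(s:=k, l0:=j)"
    have leq: "load items q x + (if j = x then items!s else 0) + (if k = x then items!l0 else 0)
       = load items p x + (if k = x then items!s else 0) + (if j = x then items!l0 else 0)" for x
      using load_upd2[OF s(1) l0(1) sl, of p k j x] s(2) k_def unfolding q_def by simp
    have ldq: "load items q x \<le> bins!x" if x: "x < length bins" for x
    proof -
      have e: "load items q x + (if j = x then items!s else 0) + (if k = x then items!l0 else 0)
       = load items p x + (if k = x then items!s else 0) + (if j = x then items!l0 else 0)" by (rule leq)
      have a: "load items p x \<le> bins!x" using ld x by auto
      have b: "load items p j \<le> bins!j" using ld j by auto
      show ?thesis
      proof (cases "x = j")
        case True then show ?thesis using e jk spc b s(3) l0(3) LS(1) by auto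
      next
        case F1: False
        then show ?thesis using e a s(3) l0(3) LS(2) by (cases "x = k") auto
      qed
    qed
    have uq: "used items q x \<longleftrightarrow> k = x \<or> j = x \<or> (\<exists>i'<length items. i' \<noteq> s \<and> i' \<noteq> l0 \<and> p i' = x)" for x
      unfolding q_def by (rule used_upd2[OF s(1) l0(1) sl])
    have up: "used items p x \<longleftrightarrow> p s = x \<or> p l0 = x \<or> (\<exists>i'<length items. i' \<noteq> s \<and> i' \<noteq> l0 \<and> p i' = x)" for x
      unfolding used_def using s(1) l0(1) by auto
    have useteq: "{x. x < length bins \<and> used items q x} = {x. x < length bins \<and> used items p x}"
    proof (intro set_eqI iffI)
      fix x assume "x \<in> {x. x < length bins \<and> used items q x}"
      then show "x \<in> {x. x < length bins \<and> used items p x}"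
        using uq[of x] up[of x] s(2) k_def by auto
    next
      fix x assume "x \<in> {x. x < length bins \<and> used items p x}"
      then show "x \<in> {x. x < length bins \<and> used items q x}"
        using uq[of x] up[of x] s(2) k_def by auto
    qed
    have cq: "cost items bins q = cost items bins p" by (rule cost_eq[OF useteq])
    have vq: "valid items bins q"
      unfolding valid_def packing_def
    proof (intro conjI allI impI)
      fix i assume "i < length items" then show "q i < length bins" using pl j k unfolding q_def by auto
    next
      fix x assume "x < length bins" then show "load items q x \<le> bins ! x" by (rule ldq)
    next
      fix x i assume x: "x < length bins" and nu: "\<not> used items q x" and i: "i < length items" and xi: "x < q i"
      have xne: "x \<noteq> k" "x \<noteq> j" using nu uq by auto
      have nup: "\<not> used items p x" using nu uq up xne s(2) k_def by auto
      show "bins ! x < items ! i"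
      proof (cases "i = s")
        case True
        have "\<not> j < x"
        proof
          assume "j < x"
          moreover have "x < p l0" using xi True k_def sl unfolding q_def by simp
          ultimately show False using False x nup l0(1) by blast
        qed
        then have "x < p s" using xne s(2) by simp
        then show ?thesis using un x nup True s(1) by blast
      next
        case F2: False
        show ?thesis
        proof (cases "i = l0")
          case True
          then have "x < p l0" using xi l0 unfolding q_def by auto
          then show ?thesis using un x nup True l0(1) by blast
        next
          case False
          then have "q i = p i" using F2 unfolding q_def by simp
          then show ?thesis using un x nup i xi by auto
        qed
      qed
    qed
    have oq: "optimal items bins q" using vq opt cq unfolding optimal_def by simp
    have "sp items q + p s + p l0 = sp items p + k + j" unfolding q_def by (rule sp_upd2[OF s(1) l0(1) sl])
    then have spq: "sp items q = sp items p" using s(2) k_def by simp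
    have "sl S items q + (if items!s = Lsz S then p s else 0) + (if items!l0 = Lsz S then p l0 else 0)
       = sl S items p + (if items!s = Lsz S then k else 0) + (if items!l0 = Lsz S then j else 0)"
      unfolding q_def by (rule sl_upd2[OF s(1) l0(1) sl])
    then have "sl S items q + k = sl S items p + j" using s(3) l0(3) LS(2) k_def by simp
    then have "sl S items q < sl S items p" using l0 k_def by simp
    then show False using minl oq spq by fastforce
  qed
qed


lemma thr:
  assumes opt: "optimal items bins p"
   and nobad: "\<forall>j<length bins. \<not> bad S items bins p j"
   and mins: "\<forall>q. optimal items bins q \<longrightarrow> sp items p \<le> sp items q"
  shows "thrifty items bins p"
  unfolding thrifty_def
proof (intro allI impI notI)
  fix j assume j: "j < length bins" and w: "wasteful items bins p j"
  have V: "valid items bins p" using opt unfolding optimal_def by blast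
  have pl: "\<forall>i<length items. p i < length bins" and ld: "\<forall>x<length bins. load items p x \<le> bins!x"
    using V unfolding valid_def packing_def by auto
  have un: "\<forall>x<length bins. \<not> used items p x \<longrightarrow> (\<forall>i<length items. x < p i \<longrightarrow> bins!x < items!i)"
    using V unfolding valid_def by auto
  obtain i0 where i0: "i0 < length items" "j < p i0" "items!i0 \<le> bins!j - load items p j"
    using w unfolding wasteful_def by blast
  have usedj: "used items p j"
  proof (rule ccontr)
    assume nu: "\<not> used items p j"
    then have "bins!j < items!i0" using un j i0 by auto
    then show False using i0(3) load_unused[OF nu] by simp
  qed
  define F where "F = (\<lambda>i. i < length items \<and> j < p i \<and> items!i \<le> bins!j - load items p j)"
  obtain i where iF: "F i" and im: "\<forall>y. F y \<longrightarrow> length bins - p i \<le> length bins - p y"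
    using ex_has_least_nat[of F i0 "\<lambda>i. length bins - p i"] i0 F_def by blast
  have i: "i < length items" "j < p i" "items!i \<le> bins!j - load items p j" using iF F_def by auto
  have imax: "\<forall>y. F y \<longrightarrow> p y \<le> p i" using im pl i(1) F_def by fastforce
  define k where "k = p i"
  have k: "k < length bins" using pl i k_def by auto
  have jk: "j \<noteq> k" using i k_def by simp
  define q where "q = p(i:=j)"
  have leq: "load items q x + (if k = x then items!i else 0) = load items p x + (if j = x then items!i else 0)" for x
    using load_upd[OF i(1), of p j x] k_def unfolding q_def by simp
  have ldq: "load items q x \<le> bins!x" if x: "x < length bins" for x
  proof -
    have a: "load items p x \<le> bins!x" using ld x by auto
    have b: "load items p j \<le> bins!j" using ld j by auto
    show ?thesis using leq[of x] a b i(3) by (cases "x = j") auto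
  qed
  have uq: "used items q x \<longleftrightarrow> j = x \<or> (\<exists>i'<length items. i' \<noteq> i \<and> p i' = x)" for x
    unfolding q_def by (rule used_upd[OF i(1)])
  have up: "used items p x \<longleftrightarrow> p i = x \<or> (\<exists>i'<length items. i' \<noteq> i \<and> p i' = x)" for x
    unfolding used_def using i(1) by auto
  have vq_gen: "valid items bins q" if kcond: "\<not> used items q k \<Longrightarrow> (\<forall>i'<length items. k < q i' \<longrightarrow> bins!k < items!i')"
    unfolding valid_def packing_def
  proof (intro conjI allI impI)
    fix i' assume "i' < length items" then show "q i' < length bins" using pl j unfolding q_def by auto
  next
    fix x assume "x < length bins" then show "load items q x \<le> bins ! x" by (rule ldq)
  next
    fix x i' assume x: "x < length bins" and nu: "\<not> used items q x" and i': "i' < length items" and xi: "x < q i'"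
    show "bins ! x < items ! i'"
    proof (cases "x = k")
      case True then show ?thesis using kcond nu i' xi by auto
    next
      case False
      then have nup: "\<not> used items p x" using nu uq up k_def by auto
      have "x < p i'" using xi i(2) unfolding q_def by (cases "i' = i") auto
      then show ?thesis using un x nup i' by auto
    qed
  qed
  show False
  proof (cases "\<exists>i'<length items. i' \<noteq> i \<and> p i' = k")
    case True
    have useteq: "{x. x < length bins \<and> used items q x} = {x. x < length bins \<and> used items p x}"
    proof (intro set_eqI iffI)
      fix x assume "x \<in> {x. x < length bins \<and> used items q x}"
      then show "x \<in> {x. x < length bins \<and> used items p x}"
        using uq[of x] up[of x] usedj by auto
    next
      fix x assume "x \<in> {x. x < length bins \<and> used items p x}"
      then show "x \<in> {x. x < length bins \<and> used items q x}"
        using uq[of x] up[of x] True k_def by auto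
    qed
    have "valid items bins q" by (rule vq_gen) (use uq True in auto)
    then have oq: "optimal items bins q" using opt cost_eq[OF useteq] unfolding optimal_def by simp
    have "sp items q + p i = sp items p + j" unfolding q_def by (rule sp_upd[OF i(1)])
    then show False using mins oq i(2) by fastforce
  next
    case False
    have useteq: "{x. x < length bins \<and> used items q x} = {x. x < length bins \<and> used items p x} - {k}"
    proof (intro set_eqI iffI)
      fix x assume "x \<in> {x. x < length bins \<and> used items q x}"
      then show "x \<in> {x. x < length bins \<and> used items p x} - {k}"
        using uq[of x] up[of x] usedj False jk by auto
    next
      fix x assume "x \<in> {x. x < length bins \<and> used items p x} - {k}"
      then show "x \<in> {x. x < length bins \<and> used items q x}"
        using uq[of x] up[of x] k_def by auto
    qed
    have usedk: "used items p k" using i k_def unfolding used_def by auto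
    have cq: "cost items bins q + bins!k = cost items bins p" by (rule cost_remove[OF useteq k usedk])
    have nuqk: "\<not> used items q k" using uq False jk by auto
    have lk: "load items p k = items!i"
      using leq[of k] load_unused[OF nuqk] jk by simp
    have "valid items bins q"
    proof (rule vq_gen)
      show "\<forall>i'<length items. k < q i' \<longrightarrow> bins!k < items!i'"
      proof (intro allI impI)
        fix i' assume i': "i' < length items" and ki: "k < q i'"
        have ii: "i' \<noteq> i" using ki jk i k_def unfolding q_def by auto
        then have pi': "p i' = q i'" unfolding q_def by simp
        show "bins!k < items!i'"
        proof (rule ccontr)
          assume "\<not> bins!k < items!i'"
          then have bk: "items!i' \<le> bins!k" by simp
          have "\<not> F i'" using imax ki pi' k_def by fastforce
          then have big: "bins!j - load items p j < items!i'" using F_def i' ki pi' i k_def by auto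
          then have "items!i = S" "items!i' = Lsz S" using itc[OF i(1)] itc[OF i'] i(3) LS by auto
          then have "bad S items bins p k"
            unfolding bad_def using usedk i(1) k_def lk bk i' ki pi' LS by auto
          then show False using nobad k by blast
        qed
      qed
    qed
    then have "cost items bins p \<le> cost items bins q" using opt unfolding optimal_def by blast
    moreover have "S \<le> bins!k" using bnd[OF k] by simp
    ultimately show False using cq S1 by linarith
  qed
qed

lemma main: "\<exists>p. optimal items bins p \<and> thrifty items bins p \<and> (\<forall>j<length bins. \<not> bad S items bins p j)"
proof -
  obtain v where v: "valid items bins v" using valid_exists by blast
  obtain p0 where p0: "valid items bins p0" and p0m: "\<forall>q. valid items bins q \<longrightarrow> cost items bins p0 \<le> cost items bins q"
    using ex_has_least_nat[of "valid items bins" v "cost items bins"] v by blast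
  have o0: "optimal items bins p0" using p0 p0m unfolding optimal_def by blast
  obtain p1 where o1: "optimal items bins p1" and p1m: "\<forall>q. optimal items bins q \<longrightarrow> sp items p1 \<le> sp items q"
    using ex_has_least_nat[of "optimal items bins" p0 "sp items"] o0 by blast
  obtain p where pp: "optimal items bins p \<and> sp items p = sp items p1"
    and pm: "\<forall>q. optimal items bins q \<and> sp items q = sp items p1 \<longrightarrow> sl S items p \<le> sl S items q"
    using ex_has_least_nat[of "\<lambda>q. optimal items bins q \<and> sp items q = sp items p1" p1 "sl S items"] o1 by blast
  have nb: "\<forall>j<length bins. \<not> bad S items bins p j"
    using no_bad[of p] pp pm by auto
  have "thrifty items bins p"
    using thr[of p] pp nb p1m by auto
  then show ?thesis using pp nb by blast
qed

end

theorem lemma3: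
  fixes S :: nat and items bins :: "nat list"
  assumes "S > 1"
    and "\<forall>x\<in>set items. x = S \<or> x = Lsz S"
    and "\<forall>b\<in>set bins. S \<le> b \<and> b \<le> Msz S"
    and "admissible S items bins"
  shows "\<exists>p. optimal items bins p \<and> thrifty items bins p \<and>
             (\<forall>j<length bins. \<not> bad S items bins p j)"
  using main[OF assms] .

end
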